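(* Let $n$ be a positive integer, let $u:2^{[n]}\to\mathbb{R}_{\ge 0}$ be a normalized ($u(\emptyset)=0$), monotone, submodular set function, and let $c:2^{[n]}\to\mathbb{R}_{\ge 0}$ be given by $c(S)=\sum_{i\in S}c_i$ for positive costs $c_1,\dots,c_n>0$. Then any permutation of $[n]$ that orders the elements $i\in[n]$ in non-decreasing order of $c(\{i\})$ is an $n$-approximate solution to Min-Sum Submodular Cover on $(u,c)$; that is, its objective value is at most $n$ times the minimum objective value over all permutations of $[n]$.
   Context: $[n]=\{1,\dots,n\}$. Min-Sum Submodular Cover on $(u,c)$: find a permutation of $[n]$ minimizing $\sum_{i=1}^n c(S_i)\,(u(S_i)-u(S_{i-1}))$, where $S_i$ is the set of the first $i$ elements of the permutation and $S_0=\emptyset$. A set function $u$ is monotone if $u(S\cup\{i\})\ge u(S)$ and submodular if $u(S\cup\{i\})-u(S)\ge u(S\cup\{i,j\})-u(S\cup\{j\})$ for all $S\subseteq[n]$, $i,j\notin S$. *)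

theory Defs
  imports "HOL-Analysis.Analysis"
begin

text \<open>A permutation of [n] = {1..n} is represented as a bijection
  \<pi> : {1..n} \<rightarrow> {1..n}, where \<pi> k is the k-th element of the ordering.\<close>

definition is_perm :: "nat \<Rightarrow> (nat \<Rightarrow> nat) \<Rightarrow> bool" where
  "is_perm n \<pi> \<longleftrightarrow> bij_betw \<pi> {1..n} {1..n}"

definition prefix_set :: "(nat \<Rightarrow> nat) \<Rightarrow> nat \<Rightarrow> nat set" where
  "prefix_set \<pi> i = \<pi> ` {1..i}"

definition mssc_obj ::
  "nat \<Rightarrow> (nat set \<Rightarrow> real) \<Rightarrow> (nat set \<Rightarrow> real) \<Rightarrow> (nat \<Rightarrow> nat) \<Rightarrow> real" where
  "mssc_obj n u c \<pi> =
     (\<Sum>i=1..n. c (prefix_set \<pi> i) * (u (prefix_set \<pi> i) - u (prefix_set \<pi> (i - 1))))"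

definition monotone_sf :: "nat \<Rightarrow> (nat set \<Rightarrow> real) \<Rightarrow> bool" where
  "monotone_sf n u \<longleftrightarrow>
     (\<forall>S i. S \<subseteq> {1..n} \<longrightarrow> i \<in> {1..n} \<longrightarrow> u (insert i S) \<ge> u S)"

definition submodular_sf :: "nat \<Rightarrow> (nat set \<Rightarrow> real) \<Rightarrow> bool" where
  "submodular_sf n u \<longleftrightarrow>
     (\<forall>S i j. S \<subseteq> {1..n} \<longrightarrow> i \<in> {1..n} \<longrightarrow> j \<in> {1..n} \<longrightarrow> i \<notin> S \<longrightarrow> j \<notin> S \<longrightarrow>
        u (insert i S) - u S \<ge> u (insert i (insert j S)) - u (insert j S))"

end

theory Submission
  imports Defs
begin

lemma abel_id:
  fixes g f :: "nat \<Rightarrow> real"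
  shows "(\<Sum>i=1..n. (\<Sum>j=1..i. g j) * (f i - f (i - 1))) = (\<Sum>j=1..n. g j * (f n - f (j - 1)))"
proof (induction n)
  case 0 then show ?case by simp
next
  case (Suc n)
  have "(\<Sum>i=1..Suc n. (\<Sum>j=1..i. g j) * (f i - f (i - 1)))
      = (\<Sum>j=1..n. g j * (f n - f (j - 1))) + (\<Sum>j=1..Suc n. g j) * (f (Suc n) - f n)"
    using Suc by simp
  also have "\<dots> = (\<Sum>j=1..n. g j * (f n - f (j - 1)) + g j * (f (Suc n) - f n)) + g (Suc n) * (f (Suc n) - f n)"
    by (simp add: sum.distrib sum_distrib_right[symmetric] distrib_right)
  also have "\<dots> = (\<Sum>j=1..n. g j * (f (Suc n) - f (j - 1))) + g (Suc n) * (f (Suc n) - f n)"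
    by (simp add: algebra_simps)
  also have "\<dots> = (\<Sum>j=1..Suc n. g j * (f (Suc n) - f (j - 1)))"
    by simp
  finally show ?case .
qed

lemma abel_nonneg:
  fixes a X :: "nat \<Rightarrow> real"
  assumes "n \<ge> 1" "\<And>m. 1 \<le> m \<Longrightarrow> m \<le> n + 1 \<Longrightarrow> X m \<ge> 0"
    and "\<And>m. 1 \<le> m \<Longrightarrow> m < n \<Longrightarrow> a m \<le> a (Suc m)"
    and "\<And>m. 1 \<le> m \<Longrightarrow> m \<le> n \<Longrightarrow> a m \<ge> 0"
  shows "(\<Sum>m=1..n. a m * (X m - X (Suc m))) + a n * X (Suc n) \<ge> 0"
  using assms
proof (induction n)
  case 0 then show ?case by simp
next
  case (Suc n)
  show ?case
  proof (cases "n = 0")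
    case True
    then show ?thesis using Suc.prems(2)[of 1] Suc.prems(4)[of 1] by (simp add: algebra_simps)
  next
    case False
    have IH: "(\<Sum>m=1..n. a m * (X m - X (Suc m))) + a n * X (Suc n) \<ge> 0"
      using Suc.IH Suc.prems False by simp
    have "a n * X (Suc n) \<le> a (Suc n) * X (Suc n)"
      using Suc.prems(2)[of "Suc n"] Suc.prems(3)[of n] False
      by (intro mult_right_mono) auto
    then show ?thesis using IH by (simp add: algebra_simps)
  qed
qed

lemma mono_subset:
  assumes "monotone_sf n u" "A \<subseteq> B" "B \<subseteq> {1..n}"
  shows "u A \<le> u B"
proof -
  have "\<And>D. finite D \<Longrightarrow> D \<subseteq> {1..n} \<Longrightarrow> u A \<le> u (A \<union> D)"
  proof -
    fix D :: "nat set"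
    assume "finite D" "D \<subseteq> {1..n}"
    then show "u A \<le> u (A \<union> D)"
    proof (induction D rule: finite_induct)
      case empty then show ?case by simp
    next
      case (insert x D)
      have "u (A \<union> D) \<le> u (insert x (A \<union> D))"
        using assms insert.prems unfolding monotone_sf_def by auto
      then show ?case using insert by simp
    qed
  qed
  moreover have "finite (B - A)" using assms(3) finite_subset by blast
  ultimately have "u A \<le> u (A \<union> (B - A))" using assms by blast
  moreover have "A \<union> (B - A) = B" using assms by blast
  ultimately show ?thesis by simp
qed


lemma perm_facts:
  assumes "is_perm n \<sigma>"
  shows "inj_on \<sigma> {1..n}" "\<sigma> ` {1..n} = {1..n}"
    "\<And>i. i \<le> n \<Longrightarrow> prefix_set \<sigma> i \<subseteq> {1..n}"
    "prefix_set \<sigma> 0 = {}" "prefix_set \<sigma> n = {1..n}"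
    "\<And>i. 1 \<le> i \<Longrightarrow> prefix_set \<sigma> i = insert (\<sigma> i) (prefix_set \<sigma> (i - 1))"
    "\<And>i. i \<le> n \<Longrightarrow> (\<Sum>x\<in>prefix_set \<sigma> i. cs x) = (\<Sum>j=1..i. cs (\<sigma> j))"
proof -
  show inj: "inj_on \<sigma> {1..n}" and im: "\<sigma> ` {1..n} = {1..n}"
    using assms unfolding is_perm_def bij_betw_def by auto
  show "\<And>i. i \<le> n \<Longrightarrow> prefix_set \<sigma> i \<subseteq> {1..n}"
    using im unfolding prefix_set_def by auto
  show "prefix_set \<sigma> 0 = {}" "prefix_set \<sigma> n = {1..n}"
    using im unfolding prefix_set_def by auto
  show "\<And>i. 1 \<le> i \<Longrightarrow> prefix_set \<sigma> i = insert (\<sigma> i) (prefix_set \<sigma> (i - 1))"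
  proof -
    fix i :: nat assume "1 \<le> i"
    then have "{1..i} = insert i {1..i-1}" by auto
    then show "prefix_set \<sigma> i = insert (\<sigma> i) (prefix_set \<sigma> (i - 1))"
      unfolding prefix_set_def by simp
  qed
  show "\<And>i. i \<le> n \<Longrightarrow> (\<Sum>x\<in>prefix_set \<sigma> i. cs x) = (\<Sum>j=1..i. cs (\<sigma> j))"
  proof -
    fix i assume "i \<le> n"
    then have "inj_on \<sigma> {1..i}" using inj by (auto intro: inj_on_subset)
    then show "(\<Sum>x\<in>prefix_set \<sigma> i. cs x) = (\<Sum>j=1..i. cs (\<sigma> j))"
      unfolding prefix_set_def by (simp add: sum.reindex)
  qed
qed

lemma obj_rewrite:
  assumes "is_perm n \<sigma>"
  shows "mssc_obj n u (\<lambda>S. \<Sum>i\<in>S. cs i) \<sigma>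
     = (\<Sum>j=1..n. cs (\<sigma> j) * (u {1..n} - u (prefix_set \<sigma> (j - 1))))"
proof -
  have "mssc_obj n u (\<lambda>S. \<Sum>i\<in>S. cs i) \<sigma>
     = (\<Sum>i=1..n. (\<Sum>j=1..i. cs (\<sigma> j)) * (u (prefix_set \<sigma> i) - u (prefix_set \<sigma> (i - 1))))"
    unfolding mssc_obj_def using perm_facts(7)[OF assms] by (intro sum.cong) auto
  also have "\<dots> = (\<Sum>j=1..n. cs (\<sigma> j) * (u (prefix_set \<sigma> n) - u (prefix_set \<sigma> (j - 1))))"
    by (rule abel_id[where f = "\<lambda>i. u (prefix_set \<sigma> i)"])
  finally show ?thesis using perm_facts(5)[OF assms] by simp
qed


theorem theorem3:
  fixes n :: nat and u :: "nat set \<Rightarrow> real" and cs :: "nat \<Rightarrow> real"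
    and \<pi> :: "nat \<Rightarrow> nat"
  assumes n_pos: "n \<ge> 1"
    and u_nonneg: "\<forall>S. S \<subseteq> {1..n} \<longrightarrow> u S \<ge> 0"
    and u_norm: "u {} = 0"
    and u_mono: "monotone_sf n u"
    and u_sub: "submodular_sf n u"
    and cs_pos: "\<forall>i\<in>{1..n}. cs i > 0"
    and perm: "is_perm n \<pi>"
    and sorted: "\<forall>k l. 1 \<le> k \<longrightarrow> k \<le> l \<longrightarrow> l \<le> n \<longrightarrow> sum cs {\<pi> k} \<le> sum cs {\<pi> l}"
  shows "\<forall>\<sigma>. is_perm n \<sigma> \<longrightarrow>
           mssc_obj n u (\<lambda>S. \<Sum>i\<in>S. cs i) \<pi> \<le> real n * mssc_obj n u (\<lambda>S. \<Sum>i\<in>S. cs i) \<sigma>"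
proof (intro allI impI)
  fix \<sigma> assume sp: "is_perm n \<sigma>"
  define N where "N = {1..n::nat}"
  define a where "a m = cs (\<pi> m)" for m
  define U where "U = u N"
  define S where "S i = prefix_set \<pi> i" for i
  define T where "T i = prefix_set \<sigma> i" for i
  define \<Delta> where "\<Delta> i = u (S i) - u (S (i - 1))" for i
  note pf = perm_facts[OF perm]
  note sf = perm_facts[OF sp]
  have SN: "\<And>i. i \<le> n \<Longrightarrow> S i \<subseteq> N" using pf(3) S_def N_def by auto
  have TN: "\<And>i. i \<le> n \<Longrightarrow> T i \<subseteq> N" using sf(3) T_def N_def by auto
  have piN: "\<And>m. m \<in> N \<Longrightarrow> \<pi> m \<in> N" using pf(2) N_def by auto
  have sigN: "\<And>m. m \<in> N \<Longrightarrow> \<sigma> m \<in> N" using sf(2) N_def by auto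
  have \<Delta>_nn: "\<And>i. 1 \<le> i \<Longrightarrow> i \<le> n \<Longrightarrow> \<Delta> i \<ge> 0"
  proof -
    fix i :: nat assume i: "1 \<le> i" "i \<le> n"
    have "S i = insert (\<pi> i) (S (i - 1))" using pf(6)[of i] i S_def by simp
    moreover have "S (i - 1) \<subseteq> {1..n}" using SN[of "i - 1"] i N_def by auto
    moreover have "\<pi> i \<in> {1..n}" using piN[of i] i N_def by auto
    ultimately show "\<Delta> i \<ge> 0" using u_mono unfolding monotone_sf_def \<Delta>_def by auto
  qed
  have a_pos: "\<And>m. 1 \<le> m \<Longrightarrow> m \<le> n \<Longrightarrow> a m > 0"
    using cs_pos piN unfolding a_def N_def by auto
  have a_mono: "\<And>k l. 1 \<le> k \<Longrightarrow> k \<le> l \<Longrightarrow> l \<le> n \<Longrightarrow> a k \<le> a l"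
    using sorted unfolding a_def by auto
  define B where "B = (\<Sum>i=1..n. a i * \<Delta> i)"
  have step1: "mssc_obj n u (\<lambda>S. \<Sum>i\<in>S. cs i) \<pi> \<le> real n * B"
  proof -
    have "mssc_obj n u (\<lambda>S. \<Sum>i\<in>S. cs i) \<pi> = (\<Sum>i=1..n. (\<Sum>j=1..i. a j) * \<Delta> i)"
      unfolding mssc_obj_def \<Delta>_def S_def a_def using pf(7) by (intro sum.cong) auto
    also have "\<dots> \<le> (\<Sum>i=1..n. (real n * a i) * \<Delta> i)"
    proof (rule sum_mono)
      fix i assume i: "i \<in> {1..n}"
      have "(\<Sum>j=1..i. a j) \<le> (\<Sum>j=1..i. a i)"
        using i a_mono by (intro sum_mono) auto
      also have "\<dots> = real i * a i" by simp
      also have "\<dots> \<le> real n * a i" using i a_pos[of i] by (intro mult_right_mono) auto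
      finally show "(\<Sum>j=1..i. a j) * \<Delta> i \<le> (real n * a i) * \<Delta> i"
        using \<Delta>_nn[of i] i by (intro mult_right_mono) auto
    qed
    also have "\<dots> = real n * B" unfolding B_def by (simp add: sum_distrib_left mult.assoc)
    finally show ?thesis .
  qed
  define pos where "pos = inv_into N \<sigma>"
  have bs: "bij_betw \<sigma> N N" using sp unfolding is_perm_def N_def .
  have bp: "bij_betw \<pi> N N" using perm unfolding is_perm_def N_def .
  have pos1: "\<And>e. e \<in> N \<Longrightarrow> pos e \<in> N \<and> \<sigma> (pos e) = e"
    using bs unfolding pos_def bij_betw_def by (auto intro: inv_into_into f_inv_into_f)
  have pos2: "\<And>j. j \<in> N \<Longrightarrow> pos (\<sigma> j) = j"
    using bs unfolding pos_def bij_betw_def by (auto intro: inv_into_f_f)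
  define W where "W e = U - u (T (pos e - 1))" for e
  have W_nn: "\<And>e. e \<in> N \<Longrightarrow> W e \<ge> 0"
  proof -
    fix e assume "e \<in> N"
    then have "pos e - 1 \<le> n" using pos1[of e] N_def by auto
    then have "T (pos e - 1) \<subseteq> N" using TN by auto
    then show "W e \<ge> 0" unfolding W_def U_def using mono_subset[OF u_mono] N_def by auto
  qed
  have obj_s: "mssc_obj n u (\<lambda>S. \<Sum>i\<in>S. cs i) \<sigma> = (\<Sum>m=1..n. a m * W (\<pi> m))"
  proof -
    have "mssc_obj n u (\<lambda>S. \<Sum>i\<in>S. cs i) \<sigma> = (\<Sum>j\<in>N. cs (\<sigma> j) * W (\<sigma> j))"
      unfolding obj_rewrite[OF sp] W_def U_def T_def N_def using pos2 N_def by (intro sum.cong) auto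
    also have "\<dots> = (\<Sum>e\<in>N. cs e * W e)" by (rule sum.reindex_bij_betw[OF bs])
    also have "\<dots> = (\<Sum>m\<in>N. cs (\<pi> m) * W (\<pi> m))" by (rule sum.reindex_bij_betw[OF bp, symmetric])
    finally show ?thesis unfolding a_def N_def .
  qed
  define V where "V k = (\<Sum>m=k..n. W (\<pi> m))" for k
  define w where "w k = U - u (S (k - 1))" for k
  define X where "X k = V k - w k" for k
  have key: "\<And>k. 1 \<le> k \<Longrightarrow> k \<le> n \<Longrightarrow> w k \<le> V k"
  proof -
    fix k :: nat assume k: "1 \<le> k" "k \<le> n"
    define P where "P = (\<lambda>m. pos (\<pi> m)) ` {k..n}"
    have "finite P" "P \<noteq> {}" using k P_def by auto
    then have "Min P \<in> P" by (rule Min_in)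
    then obtain m0 where m0: "m0 \<in> {k..n}" "pos (\<pi> m0) = Min P" unfolding P_def by auto
    have m0min: "\<And>m. m \<in> {k..n} \<Longrightarrow> pos (\<pi> m0) \<le> pos (\<pi> m)"
      using m0(2) \<open>finite P\<close> P_def by auto
    have m0N: "m0 \<in> N" using m0 k N_def by auto
    have "W (\<pi> m0) \<le> V k" unfolding V_def
      using m0(1) W_nn piN N_def k by (intro member_le_sum) auto
    moreover have "T (pos (\<pi> m0) - 1) \<subseteq> S (k - 1)"
    proof
      fix x assume "x \<in> T (pos (\<pi> m0) - 1)"
      then obtain j where j: "1 \<le> j" "j \<le> pos (\<pi> m0) - 1" "x = \<sigma> j"
        unfolding T_def prefix_set_def by auto
      have pn: "pos (\<pi> m0) \<in> N" using pos1 piN m0N by auto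
      then have jN: "j \<in> N" using j N_def by auto
      then have xN: "x \<in> N" using sigN j by auto
      then obtain m where m: "m \<in> N" "\<pi> m = x" using bp unfolding bij_betw_def by (metis imageE)
      have "pos x = j" using pos2 jN j by auto
      have "\<not> m \<ge> k"
      proof
        assume "m \<ge> k"
        then have "m \<in> {k..n}" using m N_def by auto
        then have "pos (\<pi> m0) \<le> pos (\<pi> m)" by (rule m0min)
        then show False using \<open>pos x = j\<close> m j pn N_def by auto
      qed
      then show "x \<in> S (k - 1)" unfolding S_def prefix_set_def using m N_def by auto
    qed
    then have "u (T (pos (\<pi> m0) - 1)) \<le> u (S (k - 1))"
      using mono_subset[OF u_mono] SN[of "k - 1"] k N_def by auto
    ultimately show "w k \<le> V k" unfolding w_def W_def by auto
  qed
  have Xnn: "\<And>m. 1 \<le> m \<Longrightarrow> m \<le> n + 1 \<Longrightarrow> X m \<ge> 0"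
  proof -
    fix m :: nat assume m: "1 \<le> m" "m \<le> n + 1"
    show "X m \<ge> 0"
    proof (cases "m = n + 1")
      case True
      then show ?thesis unfolding X_def V_def w_def U_def S_def using pf(5) N_def by simp
    next
      case False
      then show ?thesis using key[of m] m unfolding X_def by auto
    qed
  qed
  have XSn: "X (Suc n) = 0" unfolding X_def V_def w_def U_def S_def using pf(5) N_def by simp
  have "0 \<le> (\<Sum>m=1..n. a m * (X m - X (Suc m))) + a n * X (Suc n)"
    using n_pos Xnn a_mono a_pos by (intro abel_nonneg) (auto simp: less_imp_le)
  also have "\<dots> = (\<Sum>m=1..n. a m * (V m - V (Suc m))) - (\<Sum>m=1..n. a m * (w m - w (Suc m)))"
    using XSn unfolding X_def by (simp add: sum_subtractf[symmetric] algebra_simps)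
  also have "(\<Sum>m=1..n. a m * (V m - V (Suc m))) = (\<Sum>m=1..n. a m * W (\<pi> m))"
    unfolding V_def by (intro sum.cong) (auto simp: sum.atLeast_Suc_atMost)
  also have "(\<Sum>m=1..n. a m * (w m - w (Suc m))) = B"
    unfolding B_def w_def \<Delta>_def by (intro sum.cong) auto
  finally have "B \<le> mssc_obj n u (\<lambda>S. \<Sum>i\<in>S. cs i) \<sigma>" using obj_s by simp
  then have "real n * B \<le> real n * mssc_obj n u (\<lambda>S. \<Sum>i\<in>S. cs i) \<sigma>"
    by (intro mult_left_mono) auto
  then show "mssc_obj n u (\<lambda>S. \<Sum>i\<in>S. cs i) \<pi> \<le> real n * mssc_obj n u (\<lambda>S. \<Sum>i\<in>S. cs i) \<sigma>"
    using step1 by linarith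
qed

end
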